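(* Let $(X,\tau_\delta)_{\delta>0}$ be a Hilbert dilation system (not necessarily simple), and let $H,V\subseteq X$ be subspaces with $\dim H=\dim V\ge1$ and $V$ dilation-invariant. Define $f(\delta)=\cos\angle(\tau_\delta H,V)$ for $\delta>0$. Then $f$ is unimodal in the sense: whenever $0<a<b<c$ and $f(b)<f(c)$, we have $f(a)<f(b)$.
   Context: Hilbert dilation system: $X$ a finite-dimensional real Hilbert space, $X=\bigoplus_{\nu=1}^mX_\nu$ orthogonal, $\tau_\delta|_{X_\nu}=\delta^{-\nu}\mathrm{id}$ ($\delta>0$). $V$ is dilation-invariant if $\tau_\delta V=V$ for all $\delta>0$. On $\bigwedge^kX$ use the inner product with $\langle v_1\wedge\dots\wedge v_k,w_1\wedge\dots\wedge w_k\rangle=\det(\langle v_i,w_j\rangle)$; for a $k$-dimensional subspace $W$ with basis $w_1,\ldots,w_k$ let $\omega_W=w_1\wedge\dots\wedge w_k$. For $k$-dimensional subspaces $V,W$, $\cos\angle(V,W)=|\langle\omega_V,\omega_W\rangle|/(|\omega_V||\omega_W|)$ (independent of bases). *)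

theory Defs
  imports "HOL-Analysis.Analysis"
begin

definition det_nat :: "nat \<Rightarrow> (nat \<Rightarrow> nat \<Rightarrow> real) \<Rightarrow> real" where
  "det_nat k M = (\<Sum>p\<in>{p. p permutes {..<k}}. of_int (sign p) * (\<Prod>i<k. M i (p i)))"

text \<open>Inner product of simple k-vectors v_1 wedge ... wedge v_k and w_1 wedge ... wedge w_k:
  det(<v_i,w_j>).\<close>
definition wedge_inner :: "nat \<Rightarrow> (nat \<Rightarrow> 'a::real_inner) \<Rightarrow> (nat \<Rightarrow> 'a) \<Rightarrow> real" where
  "wedge_inner k v w = det_nat k (\<lambda>i j. inner (v i) (w j))"

definition ordered_basis :: "'a::real_vector set \<Rightarrow> nat \<Rightarrow> (nat \<Rightarrow> 'a) \<Rightarrow> bool" where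
  "ordered_basis W k b \<longleftrightarrow> inj_on b {..<k} \<and> independent (b ` {..<k}) \<and> span (b ` {..<k}) = W"

definition cos_angle :: "'a::euclidean_space set \<Rightarrow> 'a set \<Rightarrow> real" where
  "cos_angle V W = (let k = dim V;
      v = (SOME b. ordered_basis V k b);
      w = (SOME b. ordered_basis W k b)
    in \<bar>wedge_inner k v w\<bar> / (sqrt (wedge_inner k v v) * sqrt (wedge_inner k w w)))"

definition hilbert_dilation_system ::
    "nat \<Rightarrow> (nat \<Rightarrow> 'a::euclidean_space set) \<Rightarrow> (real \<Rightarrow> 'a \<Rightarrow> 'a) \<Rightarrow> bool" where
  "hilbert_dilation_system m Xs tau \<longleftrightarrow>
     (\<forall>\<nu>\<in>{1..m}. subspace (Xs \<nu>)) \<and>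
     (\<forall>\<nu>\<in>{1..m}. \<forall>\<mu>\<in>{1..m}. \<nu> \<noteq> \<mu> \<longrightarrow> (\<forall>x\<in>Xs \<nu>. \<forall>y\<in>Xs \<mu>. inner x y = 0)) \<and>
     span (\<Union>\<nu>\<in>{1..m}. Xs \<nu>) = UNIV \<and>
     (\<forall>d>0. linear (tau d)) \<and>
     (\<forall>d>0. \<forall>\<nu>\<in>{1..m}. \<forall>x\<in>Xs \<nu>. tau d x = (d powr (- real \<nu>)) *\<^sub>R x)"

definition dilation_invariant :: "(real \<Rightarrow> 'a \<Rightarrow> 'a) \<Rightarrow> 'a set \<Rightarrow> bool" where
  "dilation_invariant tau V \<longleftrightarrow> (\<forall>d>0. tau d ` V = V)"

end

theory Submission
  imports Defs "Jordan_Normal_Form.Determinant"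
begin



lemma det_nat_mat: "det_nat k M = Determinant.det (Matrix.mat k k (\<lambda>(i,j). M i j))"
  unfolding det_nat_def Determinant.det_def by (auto simp: atLeast0LessThan intro!: sum.cong prod.cong)

lemma det_nat_cong:
  assumes "\<And>i j. i < k \<Longrightarrow> j < k \<Longrightarrow> M i j = N i j"
  shows "det_nat k M = det_nat k N"
  unfolding det_nat_def
proof (intro sum.cong refl arg_cong2[where f="(*)"] prod.cong)
  fix p i assume "p \<in> {p. p permutes {..<k}}" "i \<in> {..<k}"
  then show "M i (p i) = N i (p i)" using assms permutes_in_image by fastforce
qed

lemma det_nat_mult:
  "det_nat k (\<lambda>i j. \<Sum>l<k. P i l * M l j) = det_nat k P * det_nat k M"
proof -
  have "Matrix.mat k k (\<lambda>(i,j). \<Sum>l<k. P i l * M l j) =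
        Matrix.mat k k (\<lambda>(i,j). P i j) * Matrix.mat k k (\<lambda>(i,j). M i j)"
    by (rule eq_matI) (auto simp: scalar_prod_def atLeast0LessThan intro!: sum.cong)
  then show ?thesis unfolding det_nat_mat
    by (simp add: det_mult[where n=k])
qed

lemma det_nat_transpose: "det_nat k (\<lambda>i j. M j i) = det_nat k M"
proof -
  have "Matrix.mat k k (\<lambda>(i,j). M j i) = transpose_mat (Matrix.mat k k (\<lambda>(i,j). M i j))"
    by (rule eq_matI) auto
  then show ?thesis unfolding det_nat_mat by (simp add: det_transpose[where n=k])
qed

lemma det_nat_permute_rows:
  assumes p: "p permutes {..<k}"
  shows "det_nat k (\<lambda>i j. M (p i) j) = of_int (sign p) * det_nat k M"
proof -
  have p': "p permutes {0..<k}" using p by (simp add: atLeast0LessThan)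
  have "Matrix.mat k k (\<lambda>(i,j). M (p i) j) =
        Matrix.mat k k (\<lambda>(i,j). (Matrix.mat k k (\<lambda>(i,j). M i j)) $$ (p i, j))"
    by (rule eq_matI) (use p permutes_in_image in fastforce)+
  then show ?thesis unfolding det_nat_mat
    using det_permute_rows[OF _ p', of "Matrix.mat k k (\<lambda>(i,j). M i j)"] by simp
qed

lemma det_nat_id: "det_nat k (\<lambda>i j. if i = j then 1 else 0) = 1"
proof -
  have "Matrix.mat k k (\<lambda>(i,j). if i = j then (1::real) else 0) = 1\<^sub>m k"
    by (rule eq_matI) auto
  then show ?thesis unfolding det_nat_mat by simp
qed

lemma det_nat_scale_rows:
  "det_nat k (\<lambda>i j. r i * M i j) = (\<Prod>i<k. r i) * det_nat k M"
  unfolding det_nat_def by (simp add: prod.distrib sum_distrib_left mult_ac)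

lemma det_nat_scale_cols:
  "det_nat k (\<lambda>i j. M i j * r j) = (\<Prod>j<k. r j) * det_nat k M"
  unfolding det_nat_def sum_distrib_left
proof (rule sum.cong[OF refl])
  fix p assume "p \<in> {p. p permutes {..<k}}"
  then have p: "p permutes {..<k}" by simp
  have "(\<Prod>i<k. r (p i)) = (\<Prod>j<k. r j)"
    using prod.permute[OF p, of r] by (simp add: o_def)
  then show "of_int (sign p) * (\<Prod>i<k. M i (p i) * r (p i)) =
    (\<Prod>j<k. r j) * (of_int (sign p) * (\<Prod>i<k. M i (p i)))"
    by (simp add: prod.distrib)
qed

lemma det_nat_expand:
  assumes "finite E"
  shows "det_nat k (\<lambda>i j. \<Sum>e\<in>E. g i e j) =
         (\<Sum>\<phi>\<in>PiE {..<k} (\<lambda>_. E). det_nat k (\<lambda>i j. g i (\<phi> i) j))"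
proof -
  have "det_nat k (\<lambda>i j. \<Sum>e\<in>E. g i e j) =
     (\<Sum>p\<in>{p. p permutes {..<k}}. of_int (sign p) *
        (\<Sum>\<phi>\<in>PiE {..<k} (\<lambda>_. E). \<Prod>i<k. g i (\<phi> i) (p i)))"
    unfolding det_nat_def
    by (intro sum.cong refl arg_cong2[where f="(*)"]) (simp add: prod_sum_PiE assms)
  also have "\<dots> = (\<Sum>\<phi>\<in>PiE {..<k} (\<lambda>_. E). det_nat k (\<lambda>i j. g i (\<phi> i) j))"
    unfolding det_nat_def sum_distrib_left by (rule sum.swap)
  finally show ?thesis .
qed


lemma compose_perm_PiE:
  fixes k :: nat
  assumes p: "p permutes {..<k}" and phi: "\<phi> \<in> PiE {..<k} (\<lambda>_. E)"
  shows "\<phi> \<circ> p \<in> PiE {..<k} (\<lambda>_. E)"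
proof -
  have "\<And>i. i \<notin> {..<k} \<Longrightarrow> p i = i" using p by (simp add: permutes_def)
  moreover have "\<And>i. i \<in> {..<k} \<Longrightarrow> p i \<in> {..<k}" using permutes_in_image[OF p] by simp
  ultimately show ?thesis using phi by (auto simp: PiE_def Pi_def extensional_def)
qed

lemma sum_PiE_perm:
  fixes k :: nat
  assumes p: "p permutes {..<k}"
  shows "(\<Sum>\<phi>\<in>PiE {..<k} (\<lambda>_. E). F \<phi>) = (\<Sum>\<phi>\<in>PiE {..<k} (\<lambda>_. E). F (\<phi> \<circ> p))"
proof -
  have ip: "Hilbert_Choice.inv p permutes {..<k}" using p by (rule permutes_inv)
  have e1: "Hilbert_Choice.inv p \<circ> p = id" "p \<circ> Hilbert_Choice.inv p = id"
    using permutes_inv_o[OF p] by auto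
  have e2: "\<phi> \<circ> Hilbert_Choice.inv p \<circ> p = \<phi>" "\<phi> \<circ> p \<circ> Hilbert_Choice.inv p = \<phi>" for \<phi> :: "nat \<Rightarrow> _"
    using e1 by (simp_all add: o_assoc[symmetric])
  show ?thesis
    apply (rule sum.reindex_bij_witness[where i="\<lambda>\<phi>. \<phi> \<circ> p" and j="\<lambda>\<phi>. \<phi> \<circ> Hilbert_Choice.inv p"])
    subgoal by (simp add: e2)
    subgoal by (rule compose_perm_PiE[OF ip])
    subgoal by (simp add: e2)
    subgoal by (rule compose_perm_PiE[OF p])
    subgoal by (simp add: e2)
    done
qed

lemma gram_expand:
  assumes E: "finite E"
  shows "fact k * det_nat k (\<lambda>i j. \<Sum>e\<in>E. c e * a i e * a j e) =
    (\<Sum>\<phi>\<in>PiE {..<k} (\<lambda>_. E). (\<Prod>i<k. c (\<phi> i)) * (det_nat k (\<lambda>i j. a j (\<phi> i)))\<^sup>2)"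
proof -
  define D where "D \<phi> = det_nat k (\<lambda>i j. a j (\<phi> i))" for \<phi>
  define F where "F \<phi> = (\<Prod>i<k. c (\<phi> i) * a i (\<phi> i)) * D \<phi>" for \<phi>
  let ?P = "{p. p permutes {..<k}}"
  let ?S = "PiE {..<k} (\<lambda>_. E)"
  have fin: "finite ?P" by (simp add: finite_permutations)
  have cardP: "card ?P = fact k" by (rule card_permutations) auto
  have "det_nat k (\<lambda>i j. \<Sum>e\<in>E. c e * a i e * a j e) = (\<Sum>\<phi>\<in>?S. F \<phi>)"
    unfolding det_nat_expand[OF E]
  proof (intro sum.cong refl)
    fix x assume "x \<in> ?S"
    show "det_nat k (\<lambda>i j. c (x i) * a i (x i) * a j (x i)) = F x"
      unfolding F_def D_def det_nat_def by (simp add: prod.distrib sum_distrib_left mult_ac)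
  qed
  moreover have "(\<Sum>p\<in>?P. \<Sum>\<phi>\<in>?S. F (\<phi> \<circ> p)) = (\<Sum>p\<in>?P. \<Sum>\<phi>\<in>?S. F \<phi>)"
  proof (rule sum.cong[OF refl])
    fix p assume "p \<in> ?P"
    then show "(\<Sum>\<phi>\<in>?S. F (\<phi> \<circ> p)) = (\<Sum>\<phi>\<in>?S. F \<phi>)"
      using sum_PiE_perm[where p=p and k=k and E=E and F=F] by auto
  qed
  moreover have "(\<Sum>p\<in>?P. \<Sum>\<phi>\<in>?S. F \<phi>) = fact k * (\<Sum>\<phi>\<in>?S. F \<phi>)"
    using cardP by simp
  ultimately have "fact k * det_nat k (\<lambda>i j. \<Sum>e\<in>E. c e * a i e * a j e) =
       (\<Sum>p\<in>?P. \<Sum>\<phi>\<in>?S. F (\<phi> \<circ> p))"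
    by metis
  also have "\<dots> = (\<Sum>\<phi>\<in>?S. \<Sum>p\<in>?P. F (\<phi> \<circ> p))" by (rule sum.swap)
  also have "\<dots> = (\<Sum>\<phi>\<in>?S. (\<Prod>i<k. c (\<phi> i)) * (D \<phi>)\<^sup>2)"
  proof (rule sum.cong[OF refl])
    fix \<phi> assume "\<phi> \<in> ?S"
    have "F (\<phi> \<circ> p) = ((\<Prod>i<k. c (\<phi> i)) * D \<phi>) * (of_int (sign p) * (\<Prod>i<k. a i (\<phi> (p i))))"
      if p: "p \<in> ?P" for p
    proof -
      have p: "p permutes {..<k}" using p by simp
      have "D (\<phi> \<circ> p) = of_int (sign p) * D \<phi>"
        unfolding D_def using det_nat_permute_rows[OF p, of "\<lambda>i j. a j (\<phi> i)"] by simp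
      moreover have "(\<Prod>i<k. c (\<phi> (p i))) = (\<Prod>i<k. c (\<phi> i))"
        using prod.permute[OF p, of "\<lambda>i. c (\<phi> i)"] by (simp add: o_def)
      ultimately show ?thesis unfolding F_def by (simp add: prod.distrib mult_ac)
    qed
    then have "(\<Sum>p\<in>?P. F (\<phi> \<circ> p)) =
        ((\<Prod>i<k. c (\<phi> i)) * D \<phi>) * (\<Sum>p\<in>?P. of_int (sign p) * (\<Prod>i<k. a i (\<phi> (p i))))"
      by (simp add: sum_distrib_left)
    also have "(\<Sum>p\<in>?P. of_int (sign p) * (\<Prod>i<k. a i (\<phi> (p i)))) = det_nat k (\<lambda>i j. a i (\<phi> j))"
      by (simp add: det_nat_def)
    also have "\<dots> = D \<phi>" unfolding D_def by (rule det_nat_transpose)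
    finally show "(\<Sum>p\<in>?P. F (\<phi> \<circ> p)) = (\<Prod>i<k. c (\<phi> i)) * (D \<phi>)\<^sup>2"
      by (simp only: power2_eq_square mult.assoc)
  qed
  finally show ?thesis unfolding D_def .
qed




lemma ob_finite_sum:
  assumes "inj_on b {..<k}"
  shows "(\<Sum>v\<in>b ` {..<k}. g v) = (\<Sum>l<k. g (b l))"
  using sum.reindex[OF assms] by simp

lemma ob_coords:
  assumes ob: "ordered_basis W k b" and x: "x \<in> W"
  shows "\<exists>c. x = (\<Sum>l<k. c l *\<^sub>R b l)"
proof -
  have inj: "inj_on b {..<k}" and sp: "span (b ` {..<k}) = W" using ob by (auto simp: ordered_basis_def)
  have "x \<in> span (b ` {..<k})" using sp x by simp
  then obtain u where "x = (\<Sum>v\<in>b ` {..<k}. u v *\<^sub>R v)"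
    using span_finite[of "b ` {..<k}"] by auto
  then have "x = (\<Sum>l<k. u (b l) *\<^sub>R b l)" using ob_finite_sum[OF inj] by simp
  then show ?thesis by (intro exI[of _ "\<lambda>l. u (b l)"])
qed

lemma ob_unique:
  assumes ob: "ordered_basis W k b" and z: "(\<Sum>l<k. c l *\<^sub>R b l) = 0" and l: "l < k"
  shows "c l = 0"
proof (rule ccontr)
  assume ne: "c l \<noteq> 0"
  have inj: "inj_on b {..<k}" and ind: "independent (b ` {..<k})" using ob by (auto simp: ordered_basis_def)
  define u where "u v = c (the_inv_into {..<k} b v)" for v
  have ub: "u (b i) = c i" if "i < k" for i
    unfolding u_def using the_inv_into_f_f[OF inj] that by simp
  have "(\<Sum>v\<in>b ` {..<k}. u v *\<^sub>R v) = (\<Sum>i<k. u (b i) *\<^sub>R b i)" by (rule ob_finite_sum[OF inj])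
  also have "\<dots> = (\<Sum>i<k. c i *\<^sub>R b i)" by (intro sum.cong refl) (simp add: ub)
  finally have "(\<Sum>v\<in>b ` {..<k}. u v *\<^sub>R v) = 0" using z by simp
  moreover have "\<exists>v\<in>b ` {..<k}. u v \<noteq> 0" using l ne ub by force
  ultimately have "dependent (b ` {..<k})"
    using dependent_finite[of "b ` {..<k}"] by blast
  then show False using ind by simp
qed

lemma ob_dim:
  assumes ob: "ordered_basis W k b"
  shows "dim W = k"
proof -
  have inj: "inj_on b {..<k}" and ind: "independent (b ` {..<k})" and sp: "span (b ` {..<k}) = W"
    using ob by (auto simp: ordered_basis_def)
  have "dim W = card (b ` {..<k})" using dim_span_eq_card_independent[OF ind] sp by simp
  also have "\<dots> = k" using card_image[OF inj] by simp
  finally show ?thesis .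
qed

lemma ob_exists:
  fixes W :: "'a::euclidean_space set"
  assumes W: "subspace W" and S: "S \<subseteq> W" and spn: "W \<subseteq> span S"
  shows "\<exists>b. ordered_basis W (dim W) b \<and> (\<forall>i<dim W. b i \<in> S)"
proof -
  obtain B where B: "B \<subseteq> S" "independent B" "S \<subseteq> span B" "card B = dim S"
    using basis_exists[of S] by blast
  have fin: "finite B" using B(2) by (rule finiteI_independent)
  have spB: "span B = W"
  proof
    show "span B \<subseteq> W" using B(1) S W by (meson span_minimal subset_trans)
    have "span S \<subseteq> span B" using B(3) by (simp add: span_minimal)
    then show "W \<subseteq> span B" using spn by blast
  qed
  have dS: "dim W = card B" using dim_span_eq_card_independent[OF B(2)] spB by simp
  obtain b where bb: "bij_betw b {0..<card B} B" using ex_bij_betw_nat_finite[OF fin] by blast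
  have "ordered_basis W (dim W) b"
    unfolding ordered_basis_def dS using bb B(2) spB
    by (auto simp: bij_betw_def atLeast0LessThan)
  moreover have "\<forall>i<dim W. b i \<in> S" using bb B(1) dS
    by (auto simp: bij_betw_def atLeast0LessThan)
  ultimately show ?thesis by blast
qed

lemma wedge_sym: "wedge_inner k v w = wedge_inner k w v"
  unfolding wedge_inner_def by (subst det_nat_transpose[symmetric]) (simp add: inner_commute)

lemma wedge_change:
  assumes "\<And>i. i < k \<Longrightarrow> b' i = (\<Sum>l<k. P i l *\<^sub>R b l)"
  shows "wedge_inner k b' w = det_nat k P * wedge_inner k b w"
proof -
  have "wedge_inner k b' w = det_nat k (\<lambda>i j. \<Sum>l<k. P i l * inner (b l) (w j))"
    unfolding wedge_inner_def
    by (rule det_nat_cong) (simp add: assms inner_sum_left)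
  also have "\<dots> = det_nat k P * wedge_inner k b w"
    unfolding wedge_inner_def by (rule det_nat_mult)
  finally show ?thesis .
qed

lemma ob_change:
  assumes ob: "ordered_basis W k b" and ob': "ordered_basis W k b'"
  shows "\<exists>P. (\<forall>i<k. b' i = (\<Sum>l<k. P i l *\<^sub>R b l)) \<and> det_nat k P \<noteq> 0"
proof -
  have inW: "b' i \<in> W" if "i < k" for i
    using ob' that by (auto simp: ordered_basis_def intro: span_base)
  have inW': "b i \<in> W" if "i < k" for i
    using ob that by (auto simp: ordered_basis_def intro: span_base)
  have "\<forall>i. \<exists>c. i < k \<longrightarrow> b' i = (\<Sum>l<k. c l *\<^sub>R b l)"
    using ob_coords[OF ob inW] by blast
  then obtain P where P: "\<And>i. i < k \<Longrightarrow> b' i = (\<Sum>l<k. P i l *\<^sub>R b l)" by metis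
  have "\<forall>i. \<exists>c. i < k \<longrightarrow> b i = (\<Sum>l<k. c l *\<^sub>R b' l)"
    using ob_coords[OF ob' inW'] by blast
  then obtain Q where Q: "\<And>i. i < k \<Longrightarrow> b i = (\<Sum>l<k. Q i l *\<^sub>R b' l)" by metis
  have PQ: "(\<Sum>l<k. P i l * Q l m) = (if i = m then 1 else 0)" if i: "i < k" and m: "m < k" for i m
  proof -
    have "b' i = (\<Sum>l<k. P i l *\<^sub>R b l)" by (rule P[OF i])
    also have "\<dots> = (\<Sum>l<k. P i l *\<^sub>R (\<Sum>m<k. Q l m *\<^sub>R b' m))"
      by (rule sum.cong[OF refl]) (simp add: Q)
    also have "\<dots> = (\<Sum>l<k. \<Sum>m<k. (P i l * Q l m) *\<^sub>R b' m)"
      by (simp add: scaleR_sum_right)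
    also have "\<dots> = (\<Sum>m<k. \<Sum>l<k. (P i l * Q l m) *\<^sub>R b' m)"
      by (rule sum.swap)
    also have "\<dots> = (\<Sum>m<k. (\<Sum>l<k. P i l * Q l m) *\<^sub>R b' m)"
      by (simp add: scaleR_sum_left)
    finally have e1: "b' i = (\<Sum>m<k. (\<Sum>l<k. P i l * Q l m) *\<^sub>R b' m)" .
    have e2: "b' i = (\<Sum>m<k. (if i = m then 1 else 0) *\<^sub>R b' m)"
    proof -
      have "(\<Sum>m<k. (if i = m then 1 else 0) *\<^sub>R b' m) = (\<Sum>m<k. if i = m then b' m else 0)"
        by (rule sum.cong) auto
      also have "\<dots> = b' i" using i by (simp add: sum.delta)
      finally show ?thesis by simp
    qed
    have "(\<Sum>m<k. ((\<Sum>l<k. P i l * Q l m) - (if i = m then 1 else 0)) *\<^sub>R b' m) = 0"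
      using e1 e2 by (simp add: scaleR_left_diff_distrib sum_subtractf)
    from ob_unique[OF ob' this m] show ?thesis by simp
  qed
  have "det_nat k P * det_nat k Q = det_nat k (\<lambda>i m. \<Sum>l<k. P i l * Q l m)"
    by (rule det_nat_mult[symmetric])
  also have "\<dots> = det_nat k (\<lambda>i m. if i = m then 1 else 0)"
    by (rule det_nat_cong) (simp add: PQ)
  also have "\<dots> = 1" by (rule det_nat_id)
  finally have "det_nat k P \<noteq> 0" by auto
  then show ?thesis using P by blast
qed


lemma cos_angle_eq:
  assumes obA: "ordered_basis A k b" and obB: "ordered_basis B k c"
  shows "cos_angle A B = \<bar>wedge_inner k b c\<bar> / (sqrt (wedge_inner k b b) * sqrt (wedge_inner k c c))"
proof -
  have dA: "dim A = k" by (rule ob_dim[OF obA])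
  define b0 where "b0 = (SOME b. ordered_basis A k b)"
  define c0 where "c0 = (SOME b. ordered_basis B k b)"
  have ob0: "ordered_basis A k b0" unfolding b0_def by (rule someI[of "ordered_basis A k" b, OF obA])
  have oc0: "ordered_basis B k c0" unfolding c0_def by (rule someI[of "ordered_basis B k" c, OF obB])
  obtain P where P: "\<forall>i<k. b0 i = (\<Sum>l<k. P i l *\<^sub>R b l)" and p: "det_nat k P \<noteq> 0"
    using ob_change[OF obA ob0] by blast
  obtain Q where Q: "\<forall>i<k. c0 i = (\<Sum>l<k. Q i l *\<^sub>R c l)" and q: "det_nat k Q \<noteq> 0"
    using ob_change[OF obB oc0] by blast
  have chP: "wedge_inner k b0 w = det_nat k P * wedge_inner k b w" for w
    by (rule wedge_change) (use P in auto)
  have chQ: "wedge_inner k c0 w = det_nat k Q * wedge_inner k c w" for w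
    by (rule wedge_change) (use Q in auto)
  have e1: "wedge_inner k b0 c0 = det_nat k P * det_nat k Q * wedge_inner k b c"
    using chP[of c0] chQ[of b] wedge_sym[of k b c0] wedge_sym[of k c b] by simp
  have e2: "wedge_inner k b0 b0 = (det_nat k P * det_nat k P) * wedge_inner k b b"
    using chP[of b0] chP[of b] wedge_sym[of k b b0] by simp
  have e3: "wedge_inner k c0 c0 = (det_nat k Q * det_nat k Q) * wedge_inner k c c"
    using chQ[of c0] chQ[of c] wedge_sym[of k c c0] by simp
  have "cos_angle A B = \<bar>wedge_inner k b0 c0\<bar> / (sqrt (wedge_inner k b0 b0) * sqrt (wedge_inner k c0 c0))"
    unfolding cos_angle_def Let_def dA b0_def c0_def ..
  also have "\<dots> = (\<bar>det_nat k P\<bar> * \<bar>det_nat k Q\<bar> * \<bar>wedge_inner k b c\<bar>) /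
      ((\<bar>det_nat k P\<bar> * \<bar>det_nat k Q\<bar>) * (sqrt (wedge_inner k b b) * sqrt (wedge_inner k c c)))"
    unfolding e1 e2 e3 real_sqrt_mult real_sqrt_mult_self abs_mult by (simp add: mult_ac)
  also have "\<dots> = \<bar>wedge_inner k b c\<bar> / (sqrt (wedge_inner k b b) * sqrt (wedge_inner k c c))"
    using p q by simp
  finally show ?thesis .
qed




lemma onb_collapse:
  assumes fin: "finite E" and orth: "\<forall>e\<in>E. \<forall>e'\<in>E. e \<noteq> e' \<longrightarrow> inner e e' = 0"
    and nrm: "\<forall>e\<in>E. norm e = 1" and e': "e' \<in> E"
  shows "(\<Sum>e\<in>E. f e * inner e e') = f e'"
proof -
  have "(\<Sum>e\<in>E. f e * inner e e') = (\<Sum>e\<in>E. if e = e' then f e' else 0)"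
  proof (rule sum.cong[OF refl])
    fix e assume e: "e \<in> E"
    show "f e * inner e e' = (if e = e' then f e' else 0)"
    proof (cases "e = e'")
      case True
      have "inner e' e' = 1" using nrm e' power2_norm_eq_inner[of e'] by simp
      then show ?thesis using True by simp
    qed (use orth e e' in auto)
  qed
  also have "\<dots> = f e'" using fin e' by (simp add: sum.delta')
  finally show ?thesis .
qed

lemma onb_expand:
  fixes x :: "'a::euclidean_space"
  assumes fin: "finite E" and orth: "\<forall>e\<in>E. \<forall>e'\<in>E. e \<noteq> e' \<longrightarrow> inner e e' = 0"
    and nrm: "\<forall>e\<in>E. norm e = 1" and sp: "span E = UNIV"
  shows "x = (\<Sum>e\<in>E. inner x e *\<^sub>R e)"
proof -
  define y where "y = x - (\<Sum>e\<in>E. inner x e *\<^sub>R e)"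
  have "real_inner_class.orthogonal y e'" if e': "e' \<in> E" for e'
  proof -
    have "inner y e' = inner x e' - (\<Sum>e\<in>E. inner x e * inner e e')"
      unfolding y_def by (simp add: inner_diff_left inner_sum_left)
    also have "(\<Sum>e\<in>E. inner x e * inner e e') = inner x e'"
      by (rule onb_collapse[OF fin orth nrm e'])
    finally show ?thesis by (simp add: real_inner_class.orthogonal_def)
  qed
  then have "real_inner_class.orthogonal y y" using orthogonal_to_span[of y E y] sp by auto
  then have "y = 0" by (simp add: real_inner_class.orthogonal_def)
  then show ?thesis unfolding y_def by simp
qed

lemma hds_onb:
  fixes Xs :: "nat \<Rightarrow> 'a::euclidean_space set"
  assumes hds: "hilbert_dilation_system m Xs tau"
  obtains E w where "finite E" "\<forall>e\<in>E. \<forall>e'\<in>E. e \<noteq> e' \<longrightarrow> inner e e' = 0"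
    "\<forall>e\<in>E. norm e = 1" "span E = UNIV" "\<forall>e\<in>E. w e \<in> {1..m} \<and> e \<in> Xs (w e)"
proof -
  have sub: "\<forall>\<nu>\<in>{1..m}. subspace (Xs \<nu>)"
    and orthX: "\<forall>\<nu>\<in>{1..m}. \<forall>\<mu>\<in>{1..m}. \<nu> \<noteq> \<mu> \<longrightarrow> (\<forall>x\<in>Xs \<nu>. \<forall>y\<in>Xs \<mu>. inner x y = 0)"
    and spX: "span (\<Union>\<nu>\<in>{1..m}. Xs \<nu>) = UNIV"
    using hds unfolding hilbert_dilation_system_def by auto
  have "\<forall>\<nu>\<in>{1..m}. \<exists>B. B \<subseteq> Xs \<nu> \<and> pairwise real_inner_class.orthogonal B \<and> (\<forall>x\<in>B. norm x = 1) \<and> independent B \<and> span B = Xs \<nu>"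
  proof
    fix \<nu> assume "\<nu> \<in> {1..m}"
    then have "subspace (Xs \<nu>)" using sub by blast
    from orthonormal_basis_subspace[OF this] show "\<exists>B. B \<subseteq> Xs \<nu> \<and> pairwise real_inner_class.orthogonal B \<and> (\<forall>x\<in>B. norm x = 1) \<and> independent B \<and> span B = Xs \<nu>"
      by metis
  qed
  then obtain Bf where Bf: "\<And>\<nu>. \<nu> \<in> {1..m} \<Longrightarrow> Bf \<nu> \<subseteq> Xs \<nu> \<and> pairwise real_inner_class.orthogonal (Bf \<nu>) \<and> (\<forall>x\<in>Bf \<nu>. norm x = 1) \<and> independent (Bf \<nu>) \<and> span (Bf \<nu>) = Xs \<nu>"
    by metis
  define E where "E = (\<Union>\<nu>\<in>{1..m}. Bf \<nu>)"
  define w where "w e = (SOME \<nu>. \<nu> \<in> {1..m} \<and> e \<in> Bf \<nu>)" for e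
  have w: "w e \<in> {1..m} \<and> e \<in> Bf (w e)" if "e \<in> E" for e
    unfolding w_def by (rule someI_ex) (use that E_def in auto)
  have "finite E" unfolding E_def using Bf finiteI_independent by blast
  moreover have "\<forall>e\<in>E. \<forall>e'\<in>E. e \<noteq> e' \<longrightarrow> inner e e' = 0"
  proof (intro ballI impI)
    fix e e' assume e: "e \<in> E" and e': "e' \<in> E" and ne: "e \<noteq> e'"
    show "inner e e' = 0"
    proof (cases "w e = w e'")
      case True
      have we: "w e \<in> {1..m}" "e \<in> Bf (w e)" using w e by auto
      have "e' \<in> Bf (w e)" using w[OF e'] True by simp
      moreover have "pairwise real_inner_class.orthogonal (Bf (w e))" using Bf we by blast
      ultimately show ?thesis using ne we by (auto simp: pairwise_def real_inner_class.orthogonal_def)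
    next
      case False
      have "e \<in> Xs (w e)" "e' \<in> Xs (w e')" using Bf w e e' by blast+
      then show ?thesis using orthX False w e e' by blast
    qed
  qed
  moreover have "\<forall>e\<in>E. norm e = 1" unfolding E_def using Bf by blast
  moreover have "span E = UNIV"
  proof -
    have "Xs \<nu> \<subseteq> span E" if "\<nu> \<in> {1..m}" for \<nu>
    proof -
      have "Bf \<nu> \<subseteq> E" using that unfolding E_def by blast
      then have "span (Bf \<nu>) \<subseteq> span E" by (rule span_mono)
      then show ?thesis using Bf that by simp
    qed
    then have "(\<Union>\<nu>\<in>{1..m}. Xs \<nu>) \<subseteq> span E" by blast
    then have "span (\<Union>\<nu>\<in>{1..m}. Xs \<nu>) \<subseteq> span E" by (simp add: span_minimal)
    then show ?thesis using spX by auto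
  qed
  moreover have "\<forall>e\<in>E. w e \<in> {1..m} \<and> e \<in> Xs (w e)" using w Bf by blast
  ultimately show ?thesis using that by blast
qed


lemma conv_powr:
  fixes a b c p :: real
  assumes a: "0 < a" and ab: "a < b" and bc: "b < c"
  defines "l \<equiv> (ln c - ln b) / (ln c - ln a)"
  shows "b powr p \<le> l * a powr p + (1 - l) * c powr p"
proof -
  have b0: "0 < b" using a ab by linarith
  have c0: "0 < c" using a ab bc by linarith
  have lab1: "ln a < ln b" using a b0 ab by simp
  have lab2: "ln b < ln c" using c0 b0 bc by simp
  note lab = lab1 lab2
  define t where "t = (ln b - ln a) / (ln c - ln a)"
  have t01: "0 \<le> t" "t \<le> 1" unfolding t_def using lab by (auto simp: divide_simps)
  have lt: "l = 1 - t" unfolding l_def t_def using lab by (simp add: field_simps)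
  have ne: "ln c - ln a \<noteq> 0" using lab by simp
  have "(1 - t) * ln a + t * ln c = ln a + t * (ln c - ln a)" by (simp add: algebra_simps)
  also have "\<dots> = ln b" unfolding t_def using ne by simp
  finally have lnb: "ln b = (1 - t) * ln a + t * ln c" ..
  have "exp ((1 - t) *\<^sub>R (p * ln a) + t *\<^sub>R (p * ln c)) \<le> (1 - t) * exp (p * ln a) + t * exp (p * ln c)"
    by (rule convex_onD[OF exp_convex t01]) auto
  moreover have "(1 - t) *\<^sub>R (p * ln a) + t *\<^sub>R (p * ln c) = p * ln b"
    unfolding lnb by (simp add: algebra_simps)
  ultimately show ?thesis using a ab bc by (simp add: powr_def lt mult.commute)
qed

context
  fixes Xs :: "nat \<Rightarrow> 'a::euclidean_space set" and tau :: "real \<Rightarrow> 'a \<Rightarrow> 'a"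
    and E :: "'a set" and w :: "'a \<Rightarrow> nat" and m :: nat
  assumes hds: "hilbert_dilation_system m Xs tau"
    and finE: "finite E" and orthE: "\<forall>e\<in>E. \<forall>e'\<in>E. e \<noteq> e' \<longrightarrow> inner e e' = 0"
    and nrmE: "\<forall>e\<in>E. norm e = 1" and spE: "span E = UNIV"
    and wE: "\<forall>e\<in>E. w e \<in> {1..m} \<and> e \<in> Xs (w e)"
begin

lemma tau_lin: "d > 0 \<Longrightarrow> linear (tau d)"
  using hds by (simp add: hilbert_dilation_system_def)

lemma tau_X: "d > 0 \<Longrightarrow> \<nu> \<in> {1..m} \<Longrightarrow> x \<in> Xs \<nu> \<Longrightarrow> tau d x = (d powr (- real \<nu>)) *\<^sub>R x"
  using hds by (simp add: hilbert_dilation_system_def)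

lemma tau_expand:
  assumes d: "d > 0"
  shows "tau d x = (\<Sum>e\<in>E. (inner x e * d powr (- real (w e))) *\<^sub>R e)"
proof -
  have "tau d x = tau d (\<Sum>e\<in>E. inner x e *\<^sub>R e)"
    using onb_expand[OF finE orthE nrmE spE, of x] by simp
  also have "\<dots> = (\<Sum>e\<in>E. inner x e *\<^sub>R tau d e)"
    unfolding linear_sum[OF tau_lin[OF d]] by (simp add: linear_scale[OF tau_lin[OF d]])
  also have "\<dots> = (\<Sum>e\<in>E. (inner x e * d powr (- real (w e))) *\<^sub>R e)"
    by (rule sum.cong[OF refl]) (use tau_X[OF d] wE in auto)
  finally show ?thesis .
qed

lemma tau_inner:
  assumes d: "d > 0"
  shows "inner (tau d x) z = (\<Sum>e\<in>E. d powr (- real (w e)) * inner x e * inner z e)"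
  unfolding tau_expand[OF d] inner_sum_left by (simp add: inner_commute mult_ac)

lemma tau_sym:
  assumes d: "d > 0"
  shows "inner (tau d x) z = inner x (tau d z)"
  using tau_inner[OF d, of x z] tau_inner[OF d, of z x] by (simp add: inner_commute mult_ac)

lemma tau_on_basis:
  assumes d: "d > 0" and e: "e \<in> E"
  shows "inner (tau d z) e = d powr (- real (w e)) * inner z e"
proof -
  have "inner (tau d z) e = (\<Sum>e'\<in>E. (d powr (- real (w e')) * inner z e') * inner e' e)"
    unfolding tau_inner[OF d] by (simp add: inner_commute mult_ac)
  also have "\<dots> = d powr (- real (w e)) * inner z e"
    by (rule onb_collapse[OF finE orthE nrmE e])
  finally show ?thesis .
qed

lemma tau_tau:
  assumes d: "d > 0"
  shows "inner (tau d x) (tau d z) = (\<Sum>e\<in>E. (d powr (- real (w e)))\<^sup>2 * inner x e * inner z e)"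
proof -
  have "inner (tau d x) (tau d z) = (\<Sum>e\<in>E. (inner x e * d powr (- real (w e))) * inner e (tau d z))"
    by (subst tau_expand[OF d]) (simp add: inner_sum_left)
  also have "\<dots> = (\<Sum>e\<in>E. (d powr (- real (w e)))\<^sup>2 * inner x e * inner z e)"
    by (rule sum.cong[OF refl]) (simp add: inner_commute[of _ "tau d z"] tau_on_basis[OF d] power2_eq_square)
  finally show ?thesis .
qed

lemma tau_inj:
  assumes d: "d > 0" and z: "tau d x = 0"
  shows "x = 0"
proof -
  have "inner x e = 0" if e: "e \<in> E" for e
    using tau_on_basis[OF d e, of x] z d by simp
  then show ?thesis using onb_expand[OF finE orthE nrmE spE, of x] by simp
qed

lemma tau_sub: "\<nu> \<in> {1..m} \<Longrightarrow> subspace (Xs \<nu>)"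
  using hds by (simp add: hilbert_dilation_system_def)

lemma comp_in_V:
  assumes V: "subspace V" and TV: "\<forall>x\<in>V. tau 2 x \<in> V"
  shows "finite S \<Longrightarrow> S \<subseteq> {1..m} \<Longrightarrow>
    \<forall>y. (\<forall>\<nu>\<in>S. y \<nu> \<in> Xs \<nu>) \<longrightarrow> (\<Sum>\<nu>\<in>S. y \<nu>) \<in> V \<longrightarrow> (\<forall>\<nu>\<in>S. y \<nu> \<in> V)"
proof (induction S rule: finite_induct)
  case empty
  then show ?case by simp
next
  case (insert \<mu> S)
  show ?case
  proof (intro allI impI)
    fix y assume hy: "\<forall>\<nu>\<in>insert \<mu> S. y \<nu> \<in> Xs \<nu>" and hx0: "(\<Sum>\<nu>\<in>insert \<mu> S. y \<nu>) \<in> V"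
    define x where "x = (\<Sum>\<nu>\<in>insert \<mu> S. y \<nu>)"
    have xV: "x \<in> V" using hx0 x_def by simp
    have xe: "x = y \<mu> + (\<Sum>\<nu>\<in>S. y \<nu>)" unfolding x_def using insert.hyps by simp
    have lin: "linear (tau 2)" by (rule tau_lin) simp
    have muS: "\<mu> \<in> {1..m}" "S \<subseteq> {1..m}" using insert.prems by auto
    have Tx: "tau 2 x = (2 powr (- real \<mu>)) *\<^sub>R y \<mu> + (\<Sum>\<nu>\<in>S. (2 powr (- real \<nu>)) *\<^sub>R y \<nu>)"
    proof -
      have "tau 2 x = tau 2 (y \<mu>) + (\<Sum>\<nu>\<in>S. tau 2 (y \<nu>))"
        unfolding xe linear_add[OF lin] linear_sum[OF lin] by (simp add: o_def)
      also have "tau 2 (y \<mu>) = (2 powr (- real \<mu>)) *\<^sub>R y \<mu>"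
        using tau_X[of 2 \<mu> "y \<mu>"] muS hy by simp
      also have "(\<Sum>\<nu>\<in>S. tau 2 (y \<nu>)) = (\<Sum>\<nu>\<in>S. (2 powr (- real \<nu>)) *\<^sub>R y \<nu>)"
        by (rule sum.cong[OF refl]) (use tau_X[of 2] muS hy in auto)
      finally show ?thesis .
    qed
    define z where "z \<nu> = (2 powr (- real \<nu>) - 2 powr (- real \<mu>)) *\<^sub>R y \<nu>" for \<nu>
    have "(\<Sum>\<nu>\<in>S. z \<nu>) = tau 2 x - (2 powr (- real \<mu>)) *\<^sub>R x"
      unfolding Tx by (simp add: xe z_def scaleR_left_diff_distrib sum_subtractf scaleR_sum_right scaleR_right_distrib)
    also have "\<dots> \<in> V" using xV TV V by (simp add: subspace_diff subspace_scale)
    finally have zV: "(\<Sum>\<nu>\<in>S. z \<nu>) \<in> V" .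
    have zX: "\<forall>\<nu>\<in>S. z \<nu> \<in> Xs \<nu>"
    proof
      fix \<nu> assume nu: "\<nu> \<in> S"
      then have "subspace (Xs \<nu>)" "y \<nu> \<in> Xs \<nu>" using muS tau_sub hy by auto
      then show "z \<nu> \<in> Xs \<nu>" unfolding z_def by (rule subspace_scale)
    qed
    have zVs: "\<forall>\<nu>\<in>S. z \<nu> \<in> V" using insert.IH muS zX zV by blast
    have yS: "y \<nu> \<in> V" if nu: "\<nu> \<in> S" for \<nu>
    proof -
      have "\<nu> \<noteq> \<mu>" using nu insert.hyps by auto
      then have c: "2 powr (- real \<nu>) - 2 powr (- real \<mu>) \<noteq> (0::real)" by (simp add: powr_inj)
      have "y \<nu> = inverse (2 powr (- real \<nu>) - 2 powr (- real \<mu>)) *\<^sub>R z \<nu>"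
        unfolding z_def using c by simp
      then show ?thesis using zVs nu V by (simp add: subspace_scale)
    qed
    have "y \<mu> = x - (\<Sum>\<nu>\<in>S. y \<nu>)" using xe by simp
    also have "\<dots> \<in> V" using xV yS V by (simp add: subspace_diff subspace_sum)
    finally show "\<forall>\<nu>\<in>insert \<mu> S. y \<nu> \<in> V" using yS by simp
  qed
qed

lemma inv_span:
  assumes V: "subspace V" and di: "dilation_invariant tau V"
  shows "V \<subseteq> span (\<Union>\<nu>\<in>{1..m}. V \<inter> Xs \<nu>)"
proof
  fix x assume xV: "x \<in> V"
  have "tau 2 ` V = V" using di unfolding dilation_invariant_def by simp
  then have TV: "\<forall>x\<in>V. tau 2 x \<in> V" by blast
  define y where "y \<nu> = (\<Sum>e\<in>{e. e \<in> E \<and> w e = \<nu>}. inner x e *\<^sub>R e)" for \<nu>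
  have yX: "\<forall>\<nu>\<in>{1..m}. y \<nu> \<in> Xs \<nu>"
    unfolding y_def using wE tau_sub by (auto intro!: subspace_sum subspace_scale)
  have "x = (\<Sum>e\<in>E. inner x e *\<^sub>R e)" by (rule onb_expand[OF finE orthE nrmE spE])
  also have "\<dots> = (\<Sum>\<nu>\<in>{1..m}. y \<nu>)"
    unfolding y_def by (rule sum.group[symmetric]) (use finE wE in auto)
  finally have xs: "x = (\<Sum>\<nu>\<in>{1..m}. y \<nu>)" .
  have yV: "\<forall>\<nu>\<in>{1..m}. y \<nu> \<in> V"
    using comp_in_V[OF V TV, of "{1..m}"] yX xs xV by auto
  have "(\<Sum>\<nu>\<in>{1..m}. y \<nu>) \<in> span (\<Union>\<nu>\<in>{1..m}. V \<inter> Xs \<nu>)"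
  proof (rule span_sum)
    fix \<nu> assume nu: "\<nu> \<in> {1..m}"
    then have "y \<nu> \<in> V \<inter> Xs \<nu>" using yV yX by blast
    then have "y \<nu> \<in> (\<Union>\<nu>\<in>{1..m}. V \<inter> Xs \<nu>)" using nu by blast
    then show "y \<nu> \<in> span (\<Union>\<nu>\<in>{1..m}. V \<inter> Xs \<nu>)" by (rule span_base)
  qed
  then show "x \<in> span (\<Union>\<nu>\<in>{1..m}. V \<inter> Xs \<nu>)" using xs by simp
qed

lemma tau_basis:
  assumes d: "d > 0" and ob: "ordered_basis H k h"
  shows "ordered_basis (tau d ` H) k (\<lambda>i. tau d (h i))"
proof -
  have lin: "linear (tau d)" by (rule tau_lin[OF d])
  have inj: "inj (tau d)" using linear_injective_0[OF lin] tau_inj[OF d] by blast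
  have injh: "inj_on h {..<k}" and ind: "independent (h ` {..<k})" and sp: "span (h ` {..<k}) = H"
    using ob by (auto simp: ordered_basis_def)
  have img: "(\<lambda>i. tau d (h i)) ` {..<k} = tau d ` (h ` {..<k})" by (simp add: image_image)
  have "inj_on (\<lambda>i. tau d (h i)) {..<k}"
    using injh inj by (auto simp: inj_on_def inj_def)
  moreover have "independent ((\<lambda>i. tau d (h i)) ` {..<k})"
    unfolding img by (rule linear_independent_injective_image[OF lin ind]) (use inj in \<open>auto simp: inj_def inj_on_def\<close>)
  moreover have "span ((\<lambda>i. tau d (h i)) ` {..<k}) = tau d ` H"
    unfolding img span_linear_image[OF lin] sp ..
  ultimately show ?thesis by (simp add: ordered_basis_def)
qed

lemma numer:
  assumes d: "d > 0" and u: "\<forall>j<k. \<nu> j \<in> {1..m} \<and> u j \<in> Xs (\<nu> j)"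
  shows "wedge_inner k (\<lambda>i. tau d (h i)) u = d powr (- (\<Sum>j<k. real (\<nu> j))) * wedge_inner k h u"
proof -
  have "wedge_inner k (\<lambda>i. tau d (h i)) u = det_nat k (\<lambda>i j. inner (h i) (u j) * d powr (- real (\<nu> j)))"
    unfolding wedge_inner_def
  proof (rule det_nat_cong)
    fix i j assume "i < k" "j < k"
    then have "tau d (u j) = d powr (- real (\<nu> j)) *\<^sub>R u j" using tau_X[OF d] u by blast
    then show "inner (tau d (h i)) (u j) = inner (h i) (u j) * d powr (- real (\<nu> j))"
      unfolding tau_sym[OF d] by simp
  qed
  also have "\<dots> = (\<Prod>j<k. d powr (- real (\<nu> j))) * wedge_inner k h u"
    unfolding wedge_inner_def by (rule det_nat_scale_cols)
  also have "(\<Prod>j<k. d powr (- real (\<nu> j))) = d powr (- (\<Sum>j<k. real (\<nu> j)))"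
    using powr_sum[of d "\<lambda>j. - real (\<nu> j)" "{..<k}"] d by (simp add: sum_negf)
  finally show ?thesis .
qed

lemma gram:
  assumes d: "d > 0"
  shows "fact k * wedge_inner k (\<lambda>i. tau d (h i)) (\<lambda>i. tau d (h i)) =
    (\<Sum>\<phi>\<in>PiE {..<k} (\<lambda>_. E). d powr (- (2 * (\<Sum>i<k. real (w (\<phi> i))))) *
        (det_nat k (\<lambda>i j. inner (h j) (\<phi> i)))\<^sup>2)"
proof -
  have "wedge_inner k (\<lambda>i. tau d (h i)) (\<lambda>i. tau d (h i)) =
     det_nat k (\<lambda>i j. \<Sum>e\<in>E. (d powr (- real (w e)))\<^sup>2 * inner (h i) e * inner (h j) e)"
    unfolding wedge_inner_def tau_tau[OF d] ..
  then have "fact k * wedge_inner k (\<lambda>i. tau d (h i)) (\<lambda>i. tau d (h i)) =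
    (\<Sum>\<phi>\<in>PiE {..<k} (\<lambda>_. E). (\<Prod>i<k. (d powr (- real (w (\<phi> i))))\<^sup>2) *
        (det_nat k (\<lambda>i j. inner (h j) (\<phi> i)))\<^sup>2)"
    using gram_expand[OF finE, of k "\<lambda>e. (d powr (- real (w e)))\<^sup>2" "\<lambda>i e. inner (h i) e"] by simp
  also have "\<dots> = (\<Sum>\<phi>\<in>PiE {..<k} (\<lambda>_. E). d powr (- (2 * (\<Sum>i<k. real (w (\<phi> i))))) *
        (det_nat k (\<lambda>i j. inner (h j) (\<phi> i)))\<^sup>2)"
  proof (rule sum.cong[OF refl])
    fix \<phi> :: "nat \<Rightarrow> 'a"
    have sq: "(d powr (- real (w (\<phi> i))))\<^sup>2 = d powr (- 2 * real (w (\<phi> i)))" for i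
      unfolding power2_eq_square powr_add[symmetric] by simp
    have "(\<Prod>i<k. (d powr (- real (w (\<phi> i))))\<^sup>2) = (\<Prod>i<k. d powr (- 2 * real (w (\<phi> i))))"
      by (simp add: sq)
    also have "\<dots> = d powr (\<Sum>i<k. - 2 * real (w (\<phi> i)))"
      using powr_sum[of d "\<lambda>i. - 2 * real (w (\<phi> i))" "{..<k}"] d by simp
    also have "(\<Sum>i<k. - 2 * real (w (\<phi> i))) = - (2 * (\<Sum>i<k. real (w (\<phi> i))))"
      by (simp add: sum_distrib_left sum_negf)
    finally show "(\<Prod>i<k. (d powr (- real (w (\<phi> i))))\<^sup>2) * (det_nat k (\<lambda>i j. inner (h j) (\<phi> i)))\<^sup>2 =
        d powr (- (2 * (\<Sum>i<k. real (w (\<phi> i))))) * (det_nat k (\<lambda>i j. inner (h j) (\<phi> i)))\<^sup>2"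
      by simp
  qed
  finally show ?thesis .
qed

lemma main_ctx:
  fixes H V :: "'a set" and f :: "real \<Rightarrow> real" and a b c :: real
  assumes "subspace H" and "subspace V"
    and "dim H = dim V" and "dim H \<ge> 1"
    and "dilation_invariant tau V"
    and fdef: "\<And>d. d > 0 \<Longrightarrow> f d = cos_angle (tau d ` H) V"
    and "0 < a" and "a < b" and "b < c"
    and "f b < f c"
  shows "f a < f b"
proof -
  note H = assms(1) and Vs = assms(2) and dHV = assms(3) and di = assms(5)
  note abc = assms(7-9) and fbc = assms(10)
  define k where "k = dim V"
  obtain h where h: "ordered_basis H k h"
    using ob_exists[OF H subset_refl span_superset] dHV k_def by auto
  define S where "S = (\<Union>\<nu>\<in>{1..m}. V \<inter> Xs \<nu>)"
  obtain u where u: "ordered_basis V k u" and uS: "\<forall>j<k. u j \<in> S"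
    using ob_exists[OF Vs _ inv_span[OF Vs di]] unfolding k_def S_def by blast
  define \<nu> where "\<nu> j = (SOME n. n \<in> {1..m} \<and> u j \<in> Xs n)" for j
  have \<nu>: "\<forall>j<k. \<nu> j \<in> {1..m} \<and> u j \<in> Xs (\<nu> j)"
  proof (intro allI impI)
    fix j assume "j < k"
    then have "\<exists>n. n \<in> {1..m} \<and> u j \<in> Xs n" using uS unfolding S_def by blast
    then show "\<nu> j \<in> {1..m} \<and> u j \<in> Xs (\<nu> j)" unfolding \<nu>_def by (rule someI_ex)
  qed
  define Dd where "Dd = (\<Sum>j<k. real (\<nu> j))"
  define N0 where "N0 = wedge_inner k h u"
  define U where "U = wedge_inner k u u"
  define PS where "PS = PiE {..<k} (\<lambda>_. E)"
  define DF where "DF \<phi> = det_nat k (\<lambda>i j. inner (h j) (\<phi> i))" for \<phi>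
  define SW where "SW \<phi> = (\<Sum>i<k. real (w (\<phi> i)))" for \<phi>
  define g where "g x = (\<Sum>\<phi>\<in>PS. (DF \<phi>)\<^sup>2 * x powr (2 * Dd - 2 * SW \<phi>))" for x
  define K where "K = \<bar>N0\<bar> * sqrt (fact k) / sqrt U"
  have finPS: "finite PS" unfolding PS_def using finE by (simp add: finite_PiE)
  have gnn: "g x \<ge> 0" for x unfolding g_def by (intro sum_nonneg) simp
  have U0: "U \<ge> 0"
  proof -
    have t1: "tau 1 y = y" for y
    proof -
      have "tau 1 y = (\<Sum>e\<in>E. inner y e *\<^sub>R e)" by (simp add: tau_expand)
      then show ?thesis using onb_expand[OF finE orthE nrmE spE, of y] by simp
    qed
    have "fact k * U = (\<Sum>\<phi>\<in>PiE {..<k} (\<lambda>_. E). 1 powr (- (2 * (\<Sum>i<k. real (w (\<phi> i))))) *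
        (det_nat k (\<lambda>i j. inner (u j) (\<phi> i)))\<^sup>2)"
      using gram[of 1 k u] unfolding U_def t1 by simp
    also have "\<dots> \<ge> 0" by (intro sum_nonneg) simp
    finally have fu: "fact k * U \<ge> 0" .
    have fk: "(fact k :: real) > 0" by simp
    show ?thesis using fu fk by (metis zero_le_mult_iff not_le)
  qed
  have Knn: "K \<ge> 0" unfolding K_def using U0 by simp
  have fK: "f x = K / sqrt (g x)" if x: "x > 0" for x
  proof -
    define q where "q = x powr (- Dd)"
    have q: "q > 0" unfolding q_def using x by simp
    have obx: "ordered_basis (tau x ` H) k (\<lambda>i. tau x (h i))" by (rule tau_basis[OF x h])
    have "f x = \<bar>wedge_inner k (\<lambda>i. tau x (h i)) u\<bar> /
        (sqrt (wedge_inner k (\<lambda>i. tau x (h i)) (\<lambda>i. tau x (h i))) * sqrt U)"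
      unfolding fdef[OF x] U_def by (rule cos_angle_eq[OF obx u])
    also have "wedge_inner k (\<lambda>i. tau x (h i)) u = q * N0"
      unfolding q_def N0_def Dd_def by (rule numer[OF x \<nu>])
    also have "wedge_inner k (\<lambda>i. tau x (h i)) (\<lambda>i. tau x (h i)) = g x * q\<^sup>2 / fact k"
    proof -
      have "fact k * wedge_inner k (\<lambda>i. tau x (h i)) (\<lambda>i. tau x (h i)) =
          (\<Sum>\<phi>\<in>PS. x powr (- (2 * SW \<phi>)) * (DF \<phi>)\<^sup>2)"
        unfolding PS_def SW_def DF_def by (rule gram[OF x])
      also have "\<dots> = g x * q\<^sup>2"
        unfolding g_def sum_distrib_right
      proof (rule sum.cong[OF refl])
        fix \<phi>
        have "x powr (2 * Dd - 2 * SW \<phi>) * q\<^sup>2 = x powr (- (2 * SW \<phi>))"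
          unfolding q_def power2_eq_square powr_add[symmetric] by simp
        then show "x powr (- (2 * SW \<phi>)) * (DF \<phi>)\<^sup>2 = (DF \<phi>)\<^sup>2 * x powr (2 * Dd - 2 * SW \<phi>) * q\<^sup>2"
          by (simp add: mult_ac)
      qed
      finally show ?thesis by (simp add: field_simps)
    qed
    also have "sqrt (g x * q\<^sup>2 / fact k) = sqrt (g x) * q / sqrt (fact k)"
      using q by (simp add: real_sqrt_mult real_sqrt_divide)
    also have "\<bar>q * N0\<bar> / (sqrt (g x) * q / sqrt (fact k) * sqrt U) = K / sqrt (g x)"
    proof (cases "sqrt (g x) = 0")
      case True then show ?thesis by simp
    next
      case False
      then show ?thesis unfolding K_def using q by (simp add: abs_mult field_simps)
    qed
    finally show ?thesis .
  qed
  have gpos_iff: "g x = 0 \<longleftrightarrow> (\<forall>\<phi>\<in>PS. DF \<phi> = 0)" if x: "x > 0" for x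
    unfolding g_def using x finPS by (subst sum_nonneg_eq_0_iff) auto
  have a0: "a > 0" and b0: "b > 0" and c0: "c > 0" using abc by auto
  have fb: "f b = K / sqrt (g b)" and fc: "f c = K / sqrt (g c)" and fa: "f a = K / sqrt (g a)"
    using fK a0 b0 c0 by auto
  have gc0: "g c \<noteq> 0"
  proof
    assume "g c = 0" then have "f c = 0" using fc by simp
    moreover have "f b \<ge> 0" using fb Knn gnn[of b] by simp
    ultimately show False using fbc by simp
  qed
  have K0: "K > 0"
  proof (rule ccontr)
    assume "\<not> K > 0" then have "K = 0" using Knn by simp
    then show False using fb fc fbc by simp
  qed
  have allne: "\<not> (\<forall>\<phi>\<in>PS. DF \<phi> = 0)" using gc0 gpos_iff[OF c0] by simp
  have ga: "g a > 0" using gpos_iff[OF a0] allne gnn[of a] by (simp add: order_less_le)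
  have gb: "g b > 0" using gpos_iff[OF b0] allne gnn[of b] by (simp add: order_less_le)
  have gc: "g c > 0" using gc0 gnn[of c] by (simp add: order_less_le)
  have "sqrt (g c) < sqrt (g b)"
  proof (rule ccontr)
    assume "\<not> sqrt (g c) < sqrt (g b)"
    then have "sqrt (g b) \<le> sqrt (g c)" by simp
    moreover have "0 < sqrt (g c) * sqrt (g b)" using gb gc by simp
    ultimately have "K / sqrt (g c) \<le> K / sqrt (g b)" using K0 by (intro divide_left_mono) auto
    then show False using fbc fb fc by simp
  qed
  then have gcb: "g c < g b" by simp
  define l where "l = (ln c - ln b) / (ln c - ln a)"
  have l01: "0 \<le> l" "l < 1"
  proof -
    have "ln a < ln b" "ln b < ln c" using a0 b0 c0 abc by simp_all
    then show "0 \<le> l" "l < 1" unfolding l_def by (auto simp: divide_simps)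
  qed
  have conv: "g b \<le> l * g a + (1 - l) * g c"
  proof -
    have "g b \<le> (\<Sum>\<phi>\<in>PS. (DF \<phi>)\<^sup>2 * (l * a powr (2 * Dd - 2 * SW \<phi>) + (1 - l) * c powr (2 * Dd - 2 * SW \<phi>)))"
      unfolding g_def
      by (intro sum_mono mult_left_mono) (use conv_powr[OF a0 abc(2) abc(3)] l_def in auto)
    also have "\<dots> = (\<Sum>\<phi>\<in>PS. l * ((DF \<phi>)\<^sup>2 * a powr (2 * Dd - 2 * SW \<phi>)) + (1 - l) * ((DF \<phi>)\<^sup>2 * c powr (2 * Dd - 2 * SW \<phi>)))"
      by (rule sum.cong) (simp_all add: algebra_simps)
    also have "\<dots> = l * g a + (1 - l) * g c"
      unfolding g_def sum.distrib sum_distrib_left ..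
    finally show ?thesis .
  qed
  show ?thesis
  proof (rule ccontr)
    assume "\<not> f a < f b"
    then have "K / sqrt (g b) \<le> K / sqrt (g a)" using fa fb by simp
    have "sqrt (g a) \<le> sqrt (g b)"
    proof (rule ccontr)
      assume "\<not> sqrt (g a) \<le> sqrt (g b)"
      then have lt: "sqrt (g b) < sqrt (g a)" by simp
      have "K / sqrt (g a) < K / sqrt (g b)"
        using K0 lt gb by (intro divide_strict_left_mono) auto
      then show False using \<open>K / sqrt (g b) \<le> K / sqrt (g a)\<close> by simp
    qed
    then have "g a \<le> g b" by simp
    then have "l * g a \<le> l * g b" using l01 by (simp add: mult_left_mono)
    then have "(1 - l) * g b \<le> (1 - l) * g c" using conv by (simp add: algebra_simps)
    then have "g b \<le> g c" using l01 by simp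
    then show False using gcb by simp
  qed
qed

end

theorem lemma4p6:
  fixes Xs :: "nat \<Rightarrow> 'a::euclidean_space set"
    and tau :: "real \<Rightarrow> 'a \<Rightarrow> 'a"
    and H V :: "'a set"
    and f :: "real \<Rightarrow> real"
    and a b c :: real
  assumes "hilbert_dilation_system m Xs tau"
    and "subspace H" and "subspace V"
    and "dim H = dim V" and "dim H \<ge> 1"
    and "dilation_invariant tau V"
    and "\<And>d. d > 0 \<Longrightarrow> f d = cos_angle (tau d ` H) V"
    and "0 < a" and "a < b" and "b < c"
    and "f b < f c"
  shows "f a < f b"
proof -
  obtain E w where "finite E" "\<forall>e\<in>E. \<forall>e'\<in>E. e \<noteq> e' \<longrightarrow> inner e e' = 0"
    "\<forall>e\<in>E. norm e = 1" "span E = UNIV" "\<forall>e\<in>E. w e \<in> {1..m} \<and> e \<in> Xs (w e)"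
    using hds_onb[OF assms(1)] by blast
  from main_ctx[OF assms(1) this assms(2-)] show ?thesis .
qed


end
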